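(* Consider the linear regression model $X_k=\theta\phi_k+\varepsilon_k$, $k=1,\dots,n$, where $\theta\in\mathbb{R}$ is an unknown parameter, $(\phi_k)_{k=1,\dots,n}$ is a sequence of independent random variables, $(\varepsilon_k)_{k=1,\dots,n}$ is a sequence of martingale differences with respect to its natural filtration (i.e. $\mathbf{E}[\varepsilon_i\mid\sigma\{\varepsilon_j,j\le i-1\}]=0$), and $(\phi_k)$ and $(\varepsilon_k)$ are independent. Let $\theta_n=\sum_{k=1}^n\phi_kX_k\big/\sum_{k=1}^n\phi_k^2$ be the least-squares estimator. Assume that for constants $\alpha\in(0,1)$ and $D$, $$\mathbf{E}\big[\varepsilon_i^2e^{|\varepsilon_i|^\alpha}\,\big|\,\sigma\{\varepsilon_j,j\le i-1\}\big]\le D\quad\text{for all } i\in[1,n].$$ Then for any $u\ge\max\{D,1\}$ and all $x>0$, for each choice of sign $\pm$, $$\mathbf{P}\Big(\pm(\theta_n-\theta)\sqrt{\textstyle\sum_{k=1}^n\phi_k^2}\ge x\Big)\le\begin{cases}2\exp\Big\{-\dfrac{x^2}{2u}\Big\}&\text{if }0\le x<u^{1/(2-\alpha)},\\[2mm] 2\exp\Big\{-\dfrac12x^\alpha\Big\}&\text{if }x\ge u^{1/(2-\alpha)},\end{cases}$$ and this is at most $2\exp\Big\{-\dfrac{x^2}{2(u+x^{2-\alpha})}\Big\}$. In particular, for any $x>0$ there is $c_x>0$ not depending on $n$ such that $$\mathbf{P}\Big(\pm(\theta_n-\theta)\sqrt{\textstyle\sum_{k=1}^n\phi_k^2}\ge\sqrt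 n\,x\Big)=O\big(\exp\{-c_xn^{\alpha/2}\}\big),\quad n\to\infty.$$
   Context: It is implicitly assumed that $\sum_{k=1}^n\phi_k^2>0$ almost surely, so that $\theta_n$ is well defined. *)

theory Defs
  imports "HOL-Probability.Probability" "HOL-Library.Landau_Symbols"
begin

definition nat_filtration :: "'a measure \<Rightarrow> (nat \<Rightarrow> 'a \<Rightarrow> real) \<Rightarrow> nat \<Rightarrow> 'a measure" where
  "nat_filtration M e i =
     sigma (space M) (\<Union>j\<in>{1..<i}. {e j -` A \<inter> space M | A. A \<in> sets borel})"

definition lse :: "(nat \<Rightarrow> 'a \<Rightarrow> real) \<Rightarrow> (nat \<Rightarrow> 'a \<Rightarrow> real) \<Rightarrow> nat \<Rightarrow> 'a \<Rightarrow> real" where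
  "lse phi X n w = (\<Sum>k=1..n. phi k w * X k w) / (\<Sum>k=1..n. (phi k w)\<^sup>2)"

end

theory Submission
  imports Defs
begin


lemma exp_quad_bound:
  fixes t :: real
  shows "exp t \<le> 1 + t + t\<^sup>2 / 2 * exp (max t 0)"
proof (cases "t = 0")
  case True then show ?thesis by simp
next
  case False
  show ?thesis
  proof (cases "t > 0")
    case True
    from Maclaurin2[of t "\<lambda>_. exp" exp 2] True
    obtain s where s: "0 < s" "s \<le> t" "exp t = (\<Sum>m<2. exp 0 / fact m * t ^ m) + exp s / fact 2 * t ^ 2"
      by (auto intro: DERIV_exp)
    have "exp s \<le> exp t" using s(2) by simp
    then have "exp s / 2 * t^2 \<le> exp t / 2 * t^2" by (intro mult_right_mono) auto
    then show ?thesis using s True by (simp add: numeral_2_eq_2 power2_eq_square max_def)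
  next
    case nt: False
    with False have "t < 0" by simp
    from Maclaurin_minus[of t 2 "\<lambda>_. exp" exp] this
    obtain s where s: "t < s" "s < 0" "exp t = (\<Sum>m<2. exp 0 / fact m * t ^ m) + exp s / fact 2 * t ^ 2"
      by (auto intro: DERIV_exp)
    have "exp s \<le> 1" using s(2) by simp
    then have "exp s / 2 * t^2 \<le> 1 / 2 * t^2" by (intro mult_right_mono) auto
    then show ?thesis using s \<open>t<0\<close> by (simp add: numeral_2_eq_2 power2_eq_square max_def)
  qed
qed



lemma pointwise_bound:
  fixes \<alpha> l y a e :: real
  assumes al: "0 < \<alpha>" "\<alpha> < 1" and l: "0 < l" and y: "0 < y"
    and ly: "l * y powr (1 - \<alpha>) \<le> 1" and a: "\<bar>a\<bar> \<le> 1"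
  shows "exp (l * min (a * e) y) \<le> 1 + l * (a * e) + l\<^sup>2 * a\<^sup>2 / 2 * (e\<^sup>2 * exp (\<bar>e\<bar> powr \<alpha>))"
proof -
  define z where "z = min (a * e) y"
  define t where "t = l * z"
  have z_le: "z \<le> a * e" unfolding z_def by simp
  have t_le: "t \<le> l * (a * e)" unfolding t_def using z_le l by (simp add: mult_left_mono)
  have key: "t\<^sup>2 * exp (max t 0) \<le> l\<^sup>2 * a\<^sup>2 * (e\<^sup>2 * exp (\<bar>e\<bar> powr \<alpha>))"
  proof (cases "z \<le> 0")
    case True
    then have "z = a * e" unfolding z_def using y by (auto simp: min_def split: if_splits)
    moreover have "max t 0 = 0" using True l unfolding t_def by (simp add: mult_nonneg_nonpos max_def)
    moreover have "1 \<le> exp (\<bar>e\<bar> powr \<alpha>)" by simp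
    moreover have "l\<^sup>2 * a\<^sup>2 * (e\<^sup>2 * 1) \<le> l\<^sup>2 * a\<^sup>2 * (e\<^sup>2 * exp (\<bar>e\<bar> powr \<alpha>))"
      using \<open>1 \<le> exp (\<bar>e\<bar> powr \<alpha>)\<close> by (intro mult_left_mono) auto
    ultimately show ?thesis unfolding t_def
      by (simp add: power_mult_distrib mult.assoc)
  next
    case False
    then have z0: "0 < z" by simp
    have zy: "z \<le> y" unfolding z_def by simp
    have "a * e \<le> \<bar>a\<bar> * \<bar>e\<bar>" by (simp add: abs_mult[symmetric])
    also have "\<dots> \<le> 1 * \<bar>e\<bar>" using a by (intro mult_right_mono) auto
    finally have ae: "z \<le> \<bar>e\<bar>" using z_le by simp
    have "t = l * (z powr (1 - \<alpha>) * z powr \<alpha>)" unfolding t_def using z0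
      by (simp add: powr_add[symmetric])
    also have "\<dots> \<le> l * (y powr (1 - \<alpha>) * z powr \<alpha>)"
      using z0 zy al l by (intro mult_left_mono mult_right_mono powr_mono2) auto
    also have "\<dots> = (l * y powr (1 - \<alpha>)) * z powr \<alpha>" by simp
    also have "\<dots> \<le> 1 * z powr \<alpha>" using ly by (intro mult_right_mono) auto
    also have "\<dots> \<le> \<bar>e\<bar> powr \<alpha>" using ae z0 al by (simp add: powr_mono2)
    finally have tm: "max t 0 \<le> \<bar>e\<bar> powr \<alpha>" by simp
    have "t\<^sup>2 \<le> (l * (a * e))\<^sup>2" unfolding t_def using z0 z_le l
      by (intro power_mono mult_left_mono) auto
    then have "t\<^sup>2 \<le> l\<^sup>2 * a\<^sup>2 * e\<^sup>2" by (simp add: power_mult_distrib)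
    moreover have "exp (max t 0) \<le> exp (\<bar>e\<bar> powr \<alpha>)" using tm by simp
    ultimately have "t\<^sup>2 * exp (max t 0) \<le> (l\<^sup>2 * a\<^sup>2 * e\<^sup>2) * exp (\<bar>e\<bar> powr \<alpha>)"
      by (intro mult_mono) auto
    then show ?thesis by (simp add: mult.assoc)
  qed
  have "exp t \<le> 1 + t + t\<^sup>2 / 2 * exp (max t 0)" by (rule exp_quad_bound)
  also have "\<dots> \<le> 1 + l * (a * e) + l\<^sup>2 * a\<^sup>2 / 2 * (e\<^sup>2 * exp (\<bar>e\<bar> powr \<alpha>))"
    using t_le key by simp
  finally show ?thesis unfolding t_def z_def .
qed



lemma nat_filtration_space: "space (nat_filtration M e i) = space M"
  unfolding nat_filtration_def by (rule space_measure_of) auto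

lemma nat_filtration_sets: "sets (nat_filtration M e i) =
   sigma_sets (space M) (\<Union>j\<in>{1..<i}. {e j -` A \<inter> space M | A. A \<in> sets borel})"
  unfolding nat_filtration_def by (rule sets_measure_of) auto

lemma nat_filtration_subalg:
  assumes "\<And>k. e k \<in> borel_measurable M"
  shows "subalgebra M (nat_filtration M e i)"
  unfolding subalgebra_def nat_filtration_space nat_filtration_sets
proof safe
  fix x assume "x \<in> sigma_sets (space M) (\<Union>j\<in>{1..<i}. {e j -` A \<inter> space M | A. A \<in> sets borel})"
  then show "x \<in> sets M"
  proof (rule sets.sigma_sets_subset[THEN subsetD, rotated])
    show "(\<Union>j\<in>{1..<i}. {e j -` A \<inter> space M | A. A \<in> sets borel}) \<subseteq> sets M"
      using assms by (auto intro: measurable_sets)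
  qed
qed

lemma nat_filtration_meas:
  assumes "1 \<le> j" "j < i"
  shows "e j \<in> borel_measurable (nat_filtration M e i)"
proof (rule measurableI)
  fix A :: "real set" assume "A \<in> sets borel"
  then show "e j -` A \<inter> space (nat_filtration M e i) \<in> sets (nat_filtration M e i)"
    unfolding nat_filtration_space nat_filtration_sets using assms
    by (intro sigma_sets.Basic) (auto intro!: bexI[of _ j])
qed auto

lemma (in prob_space) step_bound:
  fixes F :: "'a measure" and e Z :: "'a \<Rightarrow> real"
  assumes subalg: "subalgebra M F"
    and em[measurable]: "e \<in> borel_measurable M" and ei: "integrable M e"
    and md: "AE w in M. real_cond_exp M F e w = 0"
    and mom: "AE w in M. nn_cond_exp M F (\<lambda>w. ennreal ((e w)\<^sup>2 * exp (\<bar>e w\<bar> powr \<alpha>))) w \<le> ennreal D"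
    and Du: "D \<le> u" and u0: "0 \<le> u"
    and ZF: "Z \<in> borel_measurable F" and Z0: "\<And>w. 0 \<le> Z w" and ZB: "\<And>w. Z w \<le> B"
    and al: "0 < \<alpha>" "\<alpha> < 1" and l: "0 < l" and y: "0 < y"
    and ly: "l * y powr (1 - \<alpha>) \<le> 1" and a: "\<bar>a\<bar> \<le> 1"
  shows "(\<integral>w. Z w * exp (l * min (a * e w) y) \<partial>M) \<le> (\<integral>w. Z w \<partial>M) * (1 + l\<^sup>2 * a\<^sup>2 * u / 2)"
proof -
  interpret S: sigma_finite_subalgebra M F
    by (intro finite_measure_subalgebra_is_sigma_finite) (unfold_locales, rule subalg)
  have ZM[measurable]: "Z \<in> borel_measurable M" using measurable_from_subalg[OF subalg ZF] .
  define W where "W w = (e w)\<^sup>2 * exp (\<bar>e w\<bar> powr \<alpha>)" for w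
  have WM[measurable]: "W \<in> borel_measurable M" unfolding W_def by measurable
  have W0: "0 \<le> W w" for w unfolding W_def by simp
  have B0: "0 \<le> B" using Z0 ZB order_trans by blast
  have Zint: "integrable M Z"
    by (rule integrable_const_bound[where B=B]) (use Z0 ZB in auto)
  have "(\<integral>\<^sup>+w. ennreal (Z w * W w) \<partial>M) = (\<integral>\<^sup>+w. ennreal (Z w) * ennreal (W w) \<partial>M)"
    using Z0 W0 by (simp add: ennreal_mult)
  also have "\<dots> = (\<integral>\<^sup>+w. ennreal (Z w) * nn_cond_exp M F (\<lambda>w. ennreal (W w)) w \<partial>M)"
    by (rule S.nn_cond_exp_intg[symmetric]) (use ZF in auto)
  also have "\<dots> \<le> (\<integral>\<^sup>+w. ennreal (Z w) * ennreal u \<partial>M)"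
  proof (rule nn_integral_mono_AE)
    show "AE w in M. ennreal (Z w) * nn_cond_exp M F (\<lambda>w. ennreal (W w)) w \<le> ennreal (Z w) * ennreal u"
      using mom
    proof eventually_elim
      case (elim w)
      then have "nn_cond_exp M F (\<lambda>w. ennreal (W w)) w \<le> ennreal u"
        unfolding W_def using Du by (meson ennreal_leI order_trans)
      then show ?case by (rule mult_left_mono) auto
    qed
  qed
  also have "\<dots> = (\<integral>\<^sup>+w. ennreal (Z w * u) \<partial>M)"
    using Z0 u0 by (simp add: ennreal_mult)
  also have "\<dots> = ennreal (\<integral>w. Z w * u \<partial>M)"
    by (rule nn_integral_eq_integral) (use Zint Z0 u0 in auto)
  finally have nnZW: "(\<integral>\<^sup>+w. ennreal (Z w * W w) \<partial>M) \<le> ennreal (\<integral>w. Z w * u \<partial>M)" .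
  have ZWint: "integrable M (\<lambda>w. Z w * W w)"
  proof (rule integrableI_bounded)
    show "(\<integral>\<^sup>+w. ennreal (norm (Z w * W w)) \<partial>M) < \<infinity>"
      using nnZW Z0 W0 by (simp add: abs_mult) (metis ennreal_less_top le_less_trans)
  qed auto
  have "ennreal (\<integral>w. Z w * W w \<partial>M) = (\<integral>\<^sup>+w. ennreal (Z w * W w) \<partial>M)"
    by (rule nn_integral_eq_integral[symmetric]) (use ZWint Z0 W0 in auto)
  with nnZW have "ennreal (\<integral>w. Z w * W w \<partial>M) \<le> ennreal ((\<integral>w. Z w \<partial>M) * u)" by simp
  then have ZW: "(\<integral>w. Z w * W w \<partial>M) \<le> (\<integral>w. Z w \<partial>M) * u"
    using Z0 u0 by (simp add: ennreal_le_iff integral_nonneg)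
  have Zeint: "integrable M (\<lambda>w. Z w * e w)"
  proof (rule Bochner_Integration.integrable_bound[where f="\<lambda>w. B * e w"])
    show "integrable M (\<lambda>w. B * e w)" using ei by simp
    show "AE w in M. norm (Z w * e w) \<le> norm (B * e w)"
      using Z0 ZB B0 by (auto simp: abs_mult intro!: mult_right_mono)
  qed auto
  have "(\<integral>w. Z w * e w \<partial>M) = (\<integral>w. Z w * real_cond_exp M F e w \<partial>M)"
    by (rule S.real_cond_exp_intg(2)[symmetric]) (use Zeint ZF in auto)
  also have "\<dots> = (\<integral>w. 0 \<partial>M)"
    by (rule integral_cong_AE) (use md in auto)
  finally have Ze: "(\<integral>w. Z w * e w \<partial>M) = 0" by simp
  have pw: "Z w * exp (l * min (a * e w) y) \<le> Z w + (l * a) * (Z w * e w) + (l\<^sup>2 * a\<^sup>2 / 2) * (Z w * W w)" for w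
  proof -
    have "Z w * exp (l * min (a * e w) y) \<le> Z w * (1 + l * (a * e w) + l\<^sup>2 * a\<^sup>2 / 2 * W w)"
      unfolding W_def by (rule mult_left_mono[OF pointwise_bound[OF al l y ly a] Z0])
    then show ?thesis by (simp add: algebra_simps)
  qed
  have "(\<integral>w. Z w * exp (l * min (a * e w) y) \<partial>M) \<le>
        (\<integral>w. Z w + (l * a) * (Z w * e w) + (l\<^sup>2 * a\<^sup>2 / 2) * (Z w * W w) \<partial>M)"
  proof (rule integral_mono)
    show "integrable M (\<lambda>w. Z w * exp (l * min (a * e w) y))"
    proof (rule integrable_const_bound[where B="B * exp (l * y)"])
      show "AE w in M. norm (Z w * exp (l * min (a * e w) y)) \<le> B * exp (l * y)"
      proof (intro AE_I2)
        fix w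
        have "exp (l * min (a * e w) y) \<le> exp (l * y)" using l by (simp add: mult_left_mono)
        then show "norm (Z w * exp (l * min (a * e w) y)) \<le> B * exp (l * y)"
          using Z0[of w] ZB[of w] by (simp add: abs_mult mult_mono)
      qed
    qed auto
    show "integrable M (\<lambda>w. Z w + (l * a) * (Z w * e w) + (l\<^sup>2 * a\<^sup>2 / 2) * (Z w * W w))"
      using Zint Zeint ZWint by auto
  qed (rule pw)
  also have "\<dots> = (\<integral>w. Z w \<partial>M) + (l * a) * (\<integral>w. Z w * e w \<partial>M) + (l\<^sup>2 * a\<^sup>2 / 2) * (\<integral>w. Z w * W w \<partial>M)"
    using Zint Zeint ZWint by simp
  also have "\<dots> \<le> (\<integral>w. Z w \<partial>M) + (l\<^sup>2 * a\<^sup>2 / 2) * ((\<integral>w. Z w \<partial>M) * u)"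
    unfolding Ze using ZW by (simp add: mult_left_mono)
  also have "\<dots> = (\<integral>w. Z w \<partial>M) * (1 + l\<^sup>2 * a\<^sup>2 * u / 2)"
    by (simp add: algebra_simps)
  finally show ?thesis .
qed



context prob_space begin

lemma prod_bound:
  fixes eps :: "nat \<Rightarrow> 'a \<Rightarrow> real" and a :: "nat \<Rightarrow> real"
  assumes em[measurable]: "\<And>k. eps k \<in> borel_measurable M"
    and ei: "\<And>i. i \<ge> 1 \<Longrightarrow> integrable M (eps i)"
    and md: "\<And>i. i \<ge> 1 \<Longrightarrow> AE w in M. real_cond_exp M (nat_filtration M eps i) (eps i) w = 0"
    and mom: "\<And>i. i \<ge> 1 \<Longrightarrow> AE w in M. nn_cond_exp M (nat_filtration M eps i)
             (\<lambda>w. ennreal ((eps i w)\<^sup>2 * exp (\<bar>eps i w\<bar> powr \<alpha>))) w \<le> ennreal D"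
    and Du: "D \<le> u" and u0: "0 \<le> u"
    and al: "0 < \<alpha>" "\<alpha> < 1" and l: "0 < l" and y: "0 < y"
    and ly: "l * y powr (1 - \<alpha>) \<le> 1"
  shows "(\<forall>k\<in>{1..m}. \<bar>a k\<bar> \<le> 1) \<Longrightarrow>
     (\<integral>w. (\<Prod>k\<in>{1..m}. exp (l * min (a k * eps k w) y)) \<partial>M) \<le> (\<Prod>k\<in>{1..m}. (1 + l\<^sup>2 * (a k)\<^sup>2 * u / 2))"
proof (induction m)
  case 0
  then show ?case by (simp add: prob_space)
next
  case (Suc m)
  define F where "F = nat_filtration M eps (Suc m)"
  define Z where "Z w = (\<Prod>k\<in>{1..m}. exp (l * min (a k * eps k w) y))" for w
  have ZF: "Z \<in> borel_measurable F"
    unfolding Z_def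
  proof (rule borel_measurable_prod)
    fix k assume k: "k \<in> {1..m}"
    have [measurable]: "eps k \<in> borel_measurable F"
      unfolding F_def using k by (intro nat_filtration_meas) auto
    show "(\<lambda>w. exp (l * min (a k * eps k w) y)) \<in> borel_measurable F" by measurable
  qed
  have Z0: "0 \<le> Z w" for w unfolding Z_def by (simp add: prod_nonneg)
  have ZB: "Z w \<le> exp (l * y) ^ m" for w
  proof -
    have "Z w \<le> (\<Prod>k\<in>{1..m}. exp (l * y))" unfolding Z_def
      by (intro prod_mono) (use l in \<open>auto simp: mult_left_mono\<close>)
    then show ?thesis by simp
  qed
  have aS: "\<bar>a (Suc m)\<bar> \<le> 1" using Suc.prems by auto
  have IH: "(\<integral>w. Z w \<partial>M) \<le> (\<Prod>k\<in>{1..m}. (1 + l\<^sup>2 * (a k)\<^sup>2 * u / 2))"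
    unfolding Z_def using Suc by auto
  have "(\<integral>w. (\<Prod>k\<in>{1..Suc m}. exp (l * min (a k * eps k w) y)) \<partial>M)
      = (\<integral>w. Z w * exp (l * min (a (Suc m) * eps (Suc m) w) y) \<partial>M)"
    unfolding Z_def by (simp add: prod.nat_ivl_Suc')
  also have "\<dots> \<le> (\<integral>w. Z w \<partial>M) * (1 + l\<^sup>2 * (a (Suc m))\<^sup>2 * u / 2)"
    by (rule step_bound[OF nat_filtration_subalg[OF em] em ei md[unfolded] mom Du u0 ZF[unfolded F_def] Z0 ZB al l y ly aS]) auto
  also have "\<dots> \<le> (\<Prod>k\<in>{1..m}. (1 + l\<^sup>2 * (a k)\<^sup>2 * u / 2)) * (1 + l\<^sup>2 * (a (Suc m))\<^sup>2 * u / 2)"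
    using IH u0 by (intro mult_right_mono) auto
  also have "\<dots> = (\<Prod>k\<in>{1..Suc m}. (1 + l\<^sup>2 * (a k)\<^sup>2 * u / 2))"
    by (simp add: prod.nat_ivl_Suc')
  finally show ?case .
qed

end


context prob_space begin

lemma moment_integrable:
  fixes eps :: "nat \<Rightarrow> 'a \<Rightarrow> real"
  assumes em[measurable]: "\<And>k. eps k \<in> borel_measurable M"
    and mom: "AE w in M. nn_cond_exp M (nat_filtration M eps i)
             (\<lambda>w. ennreal ((eps i w)\<^sup>2 * exp (\<bar>eps i w\<bar> powr \<alpha>))) w \<le> ennreal D"
    and Du: "D \<le> u" and u0: "0 \<le> u"
  shows "integrable M (\<lambda>w. (eps i w)\<^sup>2 * exp (\<bar>eps i w\<bar> powr \<alpha>))"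
    "(\<integral>w. (eps i w)\<^sup>2 * exp (\<bar>eps i w\<bar> powr \<alpha>) \<partial>M) \<le> u"
proof -
  interpret S: sigma_finite_subalgebra M "nat_filtration M eps i"
    by (intro finite_measure_subalgebra_is_sigma_finite) (unfold_locales, rule nat_filtration_subalg[OF em])
  define W where "W w = (eps i w)\<^sup>2 * exp (\<bar>eps i w\<bar> powr \<alpha>)" for w
  have WM[measurable]: "W \<in> borel_measurable M" unfolding W_def by measurable
  have W0: "0 \<le> W w" for w unfolding W_def by simp
  have "(\<integral>\<^sup>+w. ennreal (W w) \<partial>M) = (\<integral>\<^sup>+w. (\<lambda>_. 1) w * ennreal (W w) \<partial>M)" by simp
  also have "\<dots> = (\<integral>\<^sup>+w. (\<lambda>_. 1) w * nn_cond_exp M (nat_filtration M eps i) (\<lambda>w. ennreal (W w)) w \<partial>M)"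
    by (rule S.nn_cond_exp_intg[symmetric]) auto
  also have "\<dots> \<le> (\<integral>\<^sup>+w. ennreal u \<partial>M)"
    by (rule nn_integral_mono_AE) (use mom Du in \<open>auto simp: W_def elim!: eventually_mono intro: order_trans ennreal_leI\<close>)
  also have "\<dots> = ennreal u" by (simp add: emeasure_space_1)
  finally have nn: "(\<integral>\<^sup>+w. ennreal (W w) \<partial>M) \<le> ennreal u" .
  have Wint: "integrable M W"
    by (rule integrableI_bounded) (use nn W0 in \<open>auto simp: le_less_trans\<close>)
  then show "integrable M (\<lambda>w. (eps i w)\<^sup>2 * exp (\<bar>eps i w\<bar> powr \<alpha>))" unfolding W_def .
  have "ennreal (\<integral>w. W w \<partial>M) \<le> ennreal u"
    using nn nn_integral_eq_integral[OF Wint] W0 by simp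
  then show "(\<integral>w. (eps i w)\<^sup>2 * exp (\<bar>eps i w\<bar> powr \<alpha>) \<partial>M) \<le> u"
    unfolding W_def[symmetric] using u0 by (simp add: ennreal_le_iff)
qed

end


lemma big_event_bound:
  fixes y a e \<alpha> :: real
  assumes y: "0 < y" and al: "0 < \<alpha>" and a: "\<bar>a\<bar> \<le> 1" and ye: "y < a * e"
  shows "y\<^sup>2 * exp (y powr \<alpha>) \<le> (a\<^sup>2) * ((e)\<^sup>2 * exp (\<bar>e\<bar> powr \<alpha>))"
proof -
  have "a * e \<le> \<bar>a\<bar> * \<bar>e\<bar>" by (simp add: abs_mult[symmetric])
  also have "\<dots> \<le> 1 * \<bar>e\<bar>" using a by (intro mult_right_mono) auto
  finally have "y \<le> \<bar>e\<bar>" using ye by simp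
  then have ex: "exp (y powr \<alpha>) \<le> exp (\<bar>e\<bar> powr \<alpha>)" using y al by (simp add: powr_mono2)
  have "y\<^sup>2 \<le> (a * e)\<^sup>2" using y ye by (intro power_mono) auto
  then have "y\<^sup>2 \<le> a\<^sup>2 * e\<^sup>2" by (simp add: power_mult_distrib)
  then have "y\<^sup>2 * exp (y powr \<alpha>) \<le> (a\<^sup>2 * e\<^sup>2) * exp (\<bar>e\<bar> powr \<alpha>)"
    using ex by (intro mult_mono) auto
  then show ?thesis by (simp add: mult.assoc)
qed

context prob_space begin

lemma tail_bound:
  fixes eps :: "nat \<Rightarrow> 'a \<Rightarrow> real" and a :: "nat \<Rightarrow> real"
  assumes em[measurable]: "\<And>k. eps k \<in> borel_measurable M"
    and ei: "\<And>i. i \<ge> 1 \<Longrightarrow> integrable M (eps i)"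
    and md: "\<And>i. i \<ge> 1 \<Longrightarrow> AE w in M. real_cond_exp M (nat_filtration M eps i) (eps i) w = 0"
    and mom: "\<And>i. i \<ge> 1 \<Longrightarrow> AE w in M. nn_cond_exp M (nat_filtration M eps i)
             (\<lambda>w. ennreal ((eps i w)\<^sup>2 * exp (\<bar>eps i w\<bar> powr \<alpha>))) w \<le> ennreal D"
    and Du: "D \<le> u" and u0: "0 \<le> u"
    and al: "0 < \<alpha>" "\<alpha> < 1" and l: "0 < l" and y: "0 < y"
    and ly: "l * y powr (1 - \<alpha>) \<le> 1"
    and sa: "(\<Sum>k=1..n. (a k)\<^sup>2) \<le> 1"
  shows "measure M {w\<in>space M. x \<le> (\<Sum>k=1..n. a k * eps k w)}
          \<le> exp (- (l * x) + l\<^sup>2 * u / 2) + u / (y\<^sup>2 * exp (y powr \<alpha>))"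
proof -
  have ak: "\<bar>a k\<bar> \<le> 1" if "k \<in> {1..n}" for k
  proof -
    have "(a k)\<^sup>2 \<le> (\<Sum>k=1..n. (a k)\<^sup>2)" using that by (intro member_le_sum) auto
    then have "(a k)\<^sup>2 \<le> 1" using sa by simp
    then show ?thesis by (simp add: abs_square_le_1)
  qed
  define P where "P w = (\<Prod>k\<in>{1..n}. exp (l * min (a k * eps k w) y))" for w
  define A where "A = {w\<in>space M. exp (l * x) \<le> P w}"
  define B where "B k = {w\<in>space M. y\<^sup>2 * exp (y powr \<alpha>) \<le> (a k)\<^sup>2 * ((eps k w)\<^sup>2 * exp (\<bar>eps k w\<bar> powr \<alpha>))}" for k
  have PM[measurable]: "P \<in> borel_measurable M" unfolding P_def by measurable
  have [measurable]: "A \<in> sets M" unfolding A_def by measurable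
  have [measurable]: "B k \<in> sets M" for k unfolding B_def by measurable
  have sub: "{w\<in>space M. x \<le> (\<Sum>k=1..n. a k * eps k w)} \<subseteq> A \<union> (\<Union>k\<in>{1..n}. B k)"
  proof
    fix w assume w: "w \<in> {w\<in>space M. x \<le> (\<Sum>k=1..n. a k * eps k w)}"
    show "w \<in> A \<union> (\<Union>k\<in>{1..n}. B k)"
    proof (cases "\<exists>k\<in>{1..n}. y < a k * eps k w")
      case True
      then obtain k where k: "k \<in> {1..n}" "y < a k * eps k w" by blast
      then have "w \<in> B k" unfolding B_def using w big_event_bound[OF y al(1) ak[OF k(1)] k(2)] by auto
      then show ?thesis using k by auto
    next
      case False
      then have "(\<Sum>k=1..n. min (a k * eps k w) y) = (\<Sum>k=1..n. a k * eps k w)"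
        by (intro sum.cong) (auto simp: min_def not_less)
      then have "P w = exp (l * (\<Sum>k=1..n. a k * eps k w))"
        unfolding P_def by (simp add: exp_sum[symmetric] sum_distrib_left[symmetric])
      then have "exp (l * x) \<le> P w" using w l by (simp add: mult_left_mono)
      then show ?thesis unfolding A_def using w by auto
    qed
  qed
  have "measure M {w\<in>space M. x \<le> (\<Sum>k=1..n. a k * eps k w)} \<le> measure M (A \<union> (\<Union>k\<in>{1..n}. B k))"
    by (rule finite_measure_mono[OF sub]) auto
  also have "\<dots> \<le> measure M A + measure M (\<Union>k\<in>{1..n}. B k)"
    by (rule measure_Un_le) auto
  also have "\<dots> \<le> measure M A + (\<Sum>k\<in>{1..n}. measure M (B k))"
    by (intro add_left_mono finite_measure_subadditive_finite) auto
  finally have split: "measure M {w\<in>space M. x \<le> (\<Sum>k=1..n. a k * eps k w)}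
      \<le> measure M A + (\<Sum>k\<in>{1..n}. measure M (B k))" .
  have Pint: "integrable M P"
  proof (rule integrable_const_bound[where B="exp (l * y) ^ n"])
    show "AE w in M. norm (P w) \<le> exp (l * y) ^ n"
    proof (intro AE_I2)
      fix w
      have "P w \<le> (\<Prod>k\<in>{1..n}. exp (l * y))" unfolding P_def
        by (intro prod_mono) (use l in \<open>auto simp: mult_left_mono\<close>)
      moreover have "0 \<le> P w" unfolding P_def by (simp add: prod_nonneg)
      ultimately show "norm (P w) \<le> exp (l * y) ^ n" by simp
    qed
  qed auto
  have "measure M A \<le> (\<integral>w. P w \<partial>M) / exp (l * x)"
    unfolding A_def
    by (rule integral_Markov_inequality_measure[OF Pint, where A="space M"]) (auto simp: P_def prod_nonneg)
  also have "(\<integral>w. P w \<partial>M) \<le> (\<Prod>k\<in>{1..n}. (1 + l\<^sup>2 * (a k)\<^sup>2 * u / 2))"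
    unfolding P_def by (rule prod_bound[OF em ei md mom Du u0 al l y ly]) (use ak in auto)
  also have "\<dots> \<le> (\<Prod>k\<in>{1..n}. exp (l\<^sup>2 * (a k)\<^sup>2 * u / 2))"
    by (intro prod_mono) (use u0 in auto)
  also have "\<dots> = exp (l\<^sup>2 * u / 2 * (\<Sum>k=1..n. (a k)\<^sup>2))"
    by (simp add: exp_sum[symmetric] sum_distrib_left) (simp add: algebra_simps)
  also have "\<dots> \<le> exp (l\<^sup>2 * u / 2)"
    using sa u0 by (simp add: mult_left_le)
  finally have mA0: "measure M A \<le> exp (l\<^sup>2 * u / 2) / exp (l * x)"
    by (simp add: divide_right_mono)
  have "exp (l\<^sup>2 * u / 2) / exp (l * x) = exp (- (l * x) + l\<^sup>2 * u / 2)"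
    by (subst exp_diff[symmetric]) simp
  with mA0 have mA: "measure M A \<le> exp (- (l * x) + l\<^sup>2 * u / 2)" by simp
  define c where "c = y\<^sup>2 * exp (y powr \<alpha>)"
  have c0: "0 < c" unfolding c_def using y by simp
  have mB: "measure M (B k) \<le> (a k)\<^sup>2 * u / c" if k: "k \<in> {1..n}" for k
  proof -
    have k1: "k \<ge> 1" using k by simp
    note mi = moment_integrable[OF em mom[OF k1] Du u0]
    have "measure M (B k) \<le> (\<integral>w. (a k)\<^sup>2 * ((eps k w)\<^sup>2 * exp (\<bar>eps k w\<bar> powr \<alpha>)) \<partial>M) / c"
      unfolding B_def c_def
      by (rule integral_Markov_inequality_measure[where A="space M"]) (use mi(1) c0 in \<open>auto simp: c_def\<close>)
    also have "\<dots> = (a k)\<^sup>2 * (\<integral>w. (eps k w)\<^sup>2 * exp (\<bar>eps k w\<bar> powr \<alpha>) \<partial>M) / c" by simp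
    also have "\<dots> \<le> (a k)\<^sup>2 * u / c"
      using mi(2) c0 by (intro divide_right_mono mult_left_mono) auto
    finally show ?thesis .
  qed
  have "(\<Sum>k\<in>{1..n}. measure M (B k)) \<le> (\<Sum>k\<in>{1..n}. (a k)\<^sup>2 * u / c)"
    by (rule sum_mono) (rule mB)
  also have "\<dots> = (\<Sum>k=1..n. (a k)\<^sup>2) * u / c" by (simp add: sum_divide_distrib sum_distrib_right)
  also have "\<dots> \<le> 1 * u / c" using sa u0 c0 by (intro divide_right_mono mult_right_mono) auto
  finally have "(\<Sum>k\<in>{1..n}. measure M (B k)) \<le> u / (y\<^sup>2 * exp (y powr \<alpha>))" unfolding c_def by simp
  with split mA show ?thesis by simp
qed

end


lemma thresh_iff:
  fixes x u \<alpha> :: real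
  assumes al: "\<alpha> < 1" and x: "0 < x" and u: "0 < u"
  shows "x < u powr (1 / (2 - \<alpha>)) \<longleftrightarrow> x powr (2 - \<alpha>) < u"
proof -
  have e: "(u powr (1 / (2 - \<alpha>))) powr (2 - \<alpha>) = u"
    using al u by (simp add: powr_powr)
  show ?thesis
  proof
    assume "x < u powr (1 / (2 - \<alpha>))"
    then have "x powr (2 - \<alpha>) < (u powr (1 / (2 - \<alpha>))) powr (2 - \<alpha>)"
      using al x by (intro powr_less_mono2) auto
    then show "x powr (2 - \<alpha>) < u" using e by simp
  next
    assume h: "x powr (2 - \<alpha>) < u"
    show "x < u powr (1 / (2 - \<alpha>))"
    proof (rule ccontr)
      assume "\<not> x < u powr (1 / (2 - \<alpha>))"
      then have "(u powr (1 / (2 - \<alpha>))) powr (2 - \<alpha>) \<le> x powr (2 - \<alpha>)"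
        using al by (intro powr_mono2) auto
      then show False using e h by simp
    qed
  qed
qed

lemma x_sq_split:
  fixes x \<alpha> :: real
  assumes "0 < x"
  shows "x powr \<alpha> * x powr (2 - \<alpha>) = x\<^sup>2"
  using assms by (simp add: powr_add[symmetric])

context prob_space begin

lemma fixed_weight_bound:
  fixes eps :: "nat \<Rightarrow> 'a \<Rightarrow> real" and a :: "nat \<Rightarrow> real"
  assumes em[measurable]: "\<And>k. eps k \<in> borel_measurable M"
    and ei: "\<And>i. i \<ge> 1 \<Longrightarrow> integrable M (eps i)"
    and md: "\<And>i. i \<ge> 1 \<Longrightarrow> AE w in M. real_cond_exp M (nat_filtration M eps i) (eps i) w = 0"
    and mom: "\<And>i. i \<ge> 1 \<Longrightarrow> AE w in M. nn_cond_exp M (nat_filtration M eps i)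
             (\<lambda>w. ennreal ((eps i w)\<^sup>2 * exp (\<bar>eps i w\<bar> powr \<alpha>))) w \<le> ennreal D"
    and al: "0 < \<alpha>" "\<alpha> < 1" and u: "max D 1 \<le> u" and x: "0 < x"
    and sa: "(\<Sum>k=1..n. (a k)\<^sup>2) \<le> 1"
  shows "measure M {w\<in>space M. x \<le> (\<Sum>k=1..n. a k * eps k w)}
     \<le> (if x < u powr (1 / (2 - \<alpha>)) then 2 * exp (- (x\<^sup>2 / (2 * u)))
                else 2 * exp (- (1/2) * x powr \<alpha>))"
proof -
  have u1: "1 \<le> u" and Du: "D \<le> u" using u by auto
  have u0: "0 \<le> u" "0 < u" using u1 by auto
  let ?E = "{w\<in>space M. x \<le> (\<Sum>k=1..n. a k * eps k w)}"
  have xsq: "x powr \<alpha> * x powr (2 - \<alpha>) = x\<^sup>2" by (rule x_sq_split[OF x])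
  show ?thesis
  proof (cases "x < u powr (1 / (2 - \<alpha>))")
    case True
    then have xu: "x powr (2 - \<alpha>) < u" using thresh_iff[OF al(2) x u0(2)] by simp
    have "x\<^sup>2 \<le> x powr \<alpha> * u"
      using xu xsq by (metis less_eq_real_def mult_left_mono powr_ge_zero)
    then have x2a: "x\<^sup>2 / (2 * u) \<le> x powr \<alpha>"
    proof -
      have "0 \<le> u * x powr \<alpha>" using u0 by simp
      then have "x\<^sup>2 \<le> u * (2 * x powr \<alpha>)" using \<open>x\<^sup>2 \<le> x powr \<alpha> * u\<close> by (simp add: algebra_simps)
      then show ?thesis using u0 by (simp add: field_simps)
    qed
    show ?thesis
    proof (cases "x\<^sup>2 \<le> u")
      case True
      have "1 + (- (1/2)) \<le> exp (- (1/2) :: real)" by (rule exp_ge_add_one_self)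
      also have "exp (- (1/2) :: real) \<le> exp (- (x\<^sup>2 / (2 * u)))"
        using True u0 by (simp add: field_simps)
      finally have "1 \<le> 2 * exp (- (x\<^sup>2 / (2 * u)))" by simp
      then have "measure M ?E \<le> 2 * exp (- (x\<^sup>2 / (2 * u)))"
        using prob_le_1[of ?E] by linarith
      then show ?thesis using \<open>x < _\<close> by simp
    next
      case False
      have ly: "x / u * x powr (1 - \<alpha>) \<le> 1"
      proof -
        have "x / u * x powr (1 - \<alpha>) = x powr (2 - \<alpha>) / u"
          using x by (simp add: powr_add[symmetric] powr_one)
          (metis add.commute diff_add_eq one_add_one powr_add powr_one less_eq_real_def x)
        then show ?thesis using xu u0 by simp
      qed
      have tb: "measure M ?E \<le> exp (- (x / u * x) + (x / u)\<^sup>2 * u / 2) + u / (x\<^sup>2 * exp (x powr \<alpha>))"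
        by (rule tail_bound[OF em ei md mom Du u0(1) al _ x ly sa]) (use x u0 in auto)
      have "- (x / u * x) + (x / u)\<^sup>2 * u / 2 = - (x\<^sup>2 / (2 * u))"
        using u0 by (simp add: field_simps power2_eq_square)
      moreover have "u / (x\<^sup>2 * exp (x powr \<alpha>)) \<le> exp (- (x\<^sup>2 / (2 * u)))"
      proof -
        have "u / (x\<^sup>2 * exp (x powr \<alpha>)) = (u / x\<^sup>2) * exp (- (x powr \<alpha>))"
          by (simp add: exp_minus field_simps)
        also have "\<dots> \<le> 1 * exp (- (x powr \<alpha>))"
          using False x by (intro mult_right_mono) auto
        also have "\<dots> \<le> exp (- (x\<^sup>2 / (2 * u)))" using x2a by simp
        finally show ?thesis .
      qed
      ultimately show ?thesis using tb \<open>x < _\<close> by simp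
    qed
  next
    case False
    then have xu: "u \<le> x powr (2 - \<alpha>)" using thresh_iff[OF al(2) x u0(2)] by simp
    have x1: "1 \<le> x"
    proof (rule ccontr)
      assume "\<not> 1 \<le> x"
      then have "x powr (2 - \<alpha>) < 1 powr (2 - \<alpha>)" using x al by (intro powr_less_mono2) auto
      then have "x powr (2 - \<alpha>) < 1" by simp
      then show False using xu u1 by simp
    qed
    define l where "l = x powr (\<alpha> - 1)"
    have l0: "0 < l" unfolding l_def using x by simp
    have ly: "l * x powr (1 - \<alpha>) \<le> 1"
      unfolding l_def using x by (simp add: powr_add[symmetric])
    have tb: "measure M ?E \<le> exp (- (l * x) + l\<^sup>2 * u / 2) + u / (x\<^sup>2 * exp (x powr \<alpha>))"
      by (rule tail_bound[OF em ei md mom Du u0(1) al l0 x ly sa])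
    have lx: "l * x = x powr \<alpha>"
    proof -
      have "x powr (\<alpha> - 1) * x powr 1 = x powr ((\<alpha> - 1) + 1)" by (simp only: powr_add)
      then show ?thesis unfolding l_def using x by (simp add: powr_one)
    qed
    have "l\<^sup>2 * u \<le> l\<^sup>2 * x powr (2 - \<alpha>)" using xu by (simp add: mult_left_mono)
    also have "l\<^sup>2 * x powr (2 - \<alpha>) = x powr \<alpha>"
      unfolding l_def using x
      by (simp add: power2_eq_square powr_add[symmetric])
    finally have "- (l * x) + l\<^sup>2 * u / 2 \<le> - (1/2) * x powr \<alpha>" using lx by simp
    then have t1: "exp (- (l * x) + l\<^sup>2 * u / 2) \<le> exp (- (1/2) * x powr \<alpha>)" by simp
    have "u \<le> x powr 2"
      using xu x1 al by (smt (verit) powr_mono)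
    then have ux: "u \<le> x\<^sup>2" using x by simp
    have "u / (x\<^sup>2 * exp (x powr \<alpha>)) = (u / x\<^sup>2) * exp (- (x powr \<alpha>))"
      by (simp add: exp_minus field_simps)
    also have "\<dots> \<le> 1 * exp (- (x powr \<alpha>))"
      using ux x by (intro mult_right_mono) auto
    also have "\<dots> \<le> exp (- (1/2) * x powr \<alpha>)" by simp
    finally have t2: "u / (x\<^sup>2 * exp (x powr \<alpha>)) \<le> exp (- (1/2) * x powr \<alpha>)" .
    have "measure M ?E \<le> 2 * exp (- (1/2) * x powr \<alpha>)" using tb t1 t2 by linarith
    then show ?thesis using False by (simp only: if_False)
  qed
qed

end


context prob_space begin

lemma main_bound:
  fixes phi eps X :: "nat \<Rightarrow> 'a \<Rightarrow> real" and \<theta> s u x :: real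
  assumes model: "\<And>k w. X k w = \<theta> * phi k w + eps k w"
    and pm[measurable]: "\<And>k. phi k \<in> borel_measurable M"
    and em[measurable]: "\<And>k. eps k \<in> borel_measurable M"
    and ind: "indep_var
          (Pi\<^sub>M {1..} (\<lambda>_. borel)) (\<lambda>w. \<lambda>k\<in>{1..}. phi k w)
          (Pi\<^sub>M {1..} (\<lambda>_. borel)) (\<lambda>w. \<lambda>k\<in>{1..}. eps k w)"
    and ei: "\<And>i. i \<ge> 1 \<Longrightarrow> integrable M (eps i)"
    and md: "\<And>i. i \<ge> 1 \<Longrightarrow> AE w in M. real_cond_exp M (nat_filtration M eps i) (eps i) w = 0"
    and mom: "\<And>i. i \<ge> 1 \<Longrightarrow> AE w in M. nn_cond_exp M (nat_filtration M eps i)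
             (\<lambda>w. ennreal ((eps i w)\<^sup>2 * exp (\<bar>eps i w\<bar> powr \<alpha>))) w \<le> ennreal D"
    and al: "0 < \<alpha>" "\<alpha> < 1" and u: "max D 1 \<le> u" and x: "0 < x"
    and sign: "s \<in> {1, -1 :: real}"
  shows "measure M {w \<in> space M.
               s * (lse phi X n w - \<theta>) * sqrt (\<Sum>k=1..n. (phi k w)\<^sup>2) \<ge> x}
            \<le> (if x < u powr (1 / (2 - \<alpha>)) then 2 * exp (- (x\<^sup>2 / (2 * u)))
                else 2 * exp (- (1/2) * x powr \<alpha>))"
    (is "measure M ?Ev \<le> ?bnd")
proof -
  define N where "N = (Pi\<^sub>M {1..} (\<lambda>_. borel) :: (nat \<Rightarrow> real) measure)"
  define Phi where "Phi w = (\<lambda>k\<in>{1..}. phi k w)" for w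
  define Eps where "Eps w = (\<lambda>k\<in>{1..}. eps k w)" for w
  define g where "g p = s * (\<Sum>k=1..n. fst p k * snd p k) / sqrt (\<Sum>k=1..n. (fst p k)\<^sup>2)" for p :: "(nat \<Rightarrow> real) \<times> (nat \<Rightarrow> real)"
  have bnd0: "0 \<le> ?bnd" by simp
  have PhiM[measurable]: "Phi \<in> measurable M N" unfolding Phi_def N_def by measurable
  have EpsM[measurable]: "Eps \<in> measurable M N" unfolding Eps_def N_def by measurable
  have comp: "(\<lambda>c. c k) \<in> borel_measurable N" if "k \<in> {1..n}" for k
    unfolding N_def using that by (intro measurable_component_singleton) auto
  have gM[measurable]: "g \<in> borel_measurable (N \<Otimes>\<^sub>M N)"
  proof -
    have f1: "(\<lambda>p. fst p k) \<in> borel_measurable (N \<Otimes>\<^sub>M N)" if "k \<in> {1..n}" for k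
      by (rule measurable_compose[OF measurable_fst comp[OF that]])
    have f2: "(\<lambda>p. snd p k) \<in> borel_measurable (N \<Otimes>\<^sub>M N)" if "k \<in> {1..n}" for k
      by (rule measurable_compose[OF measurable_snd comp[OF that]])
    have [measurable]: "(\<lambda>p. \<Sum>k=1..n. fst p k * snd p k) \<in> borel_measurable (N \<Otimes>\<^sub>M N)"
      by (rule borel_measurable_sum) (use f1 f2 in auto)
    have [measurable]: "(\<lambda>p. \<Sum>k=1..n. (fst p k)\<^sup>2) \<in> borel_measurable (N \<Otimes>\<^sub>M N)"
      by (rule borel_measurable_sum) (use f1 in auto)
    show ?thesis unfolding g_def by measurable
  qed
  have gM2[measurable]: "(\<lambda>e. g (c, e)) \<in> borel_measurable N" if "c \<in> space N" for c
    using measurable_Pair2[OF gM that] .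
  have ev: "s * (lse phi X n w - \<theta>) * sqrt (\<Sum>k=1..n. (phi k w)\<^sup>2) = g (Phi w, Eps w)" for w
  proof -
    define S where "S = (\<Sum>k=1..n. (phi k w)\<^sup>2)"
    define T where "T = (\<Sum>k=1..n. phi k w * eps k w)"
    have gS: "g (Phi w, Eps w) = s * T / sqrt S"
      unfolding g_def S_def T_def Phi_def Eps_def by (intro arg_cong2[where f="\<lambda>a b. s * a / sqrt b"] sum.cong) auto
    have num: "(\<Sum>k=1..n. phi k w * X k w) = \<theta> * S + T"
    proof -
      have "(\<Sum>k=1..n. phi k w * X k w) = (\<Sum>k=1..n. \<theta> * (phi k w)\<^sup>2 + phi k w * eps k w)"
        by (rule sum.cong) (simp_all add: model power2_eq_square distrib_left)
      also have "\<dots> = \<theta> * S + T" by (simp add: sum.distrib sum_distrib_left S_def T_def)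
      finally show ?thesis .
    qed
    show ?thesis
    proof (cases "S = 0")
      case True
      then show ?thesis unfolding gS using True by (simp add: S_def)
    next
      case False
      have S0: "0 < S" using False unfolding S_def by (metis less_eq_real_def sum_nonneg zero_le_power2)
      have "lse phi X n w - \<theta> = T / S"
        unfolding lse_def num S_def[symmetric] using False by (simp add: field_simps)
      then have "s * (lse phi X n w - \<theta>) * sqrt S = s * T * (sqrt S / S)" by simp
      also have "sqrt S / S = 1 / sqrt S" using S0 by (simp add: field_simps)
      finally show ?thesis unfolding gS S_def by simp
    qed
  qed
  define Q where "Q = {p \<in> space (N \<Otimes>\<^sub>M N). x \<le> g p}"
  have Qs[measurable]: "Q \<in> sets (N \<Otimes>\<^sub>M N)" unfolding Q_def by measurable
  have PE: "(\<lambda>w. (Phi w, Eps w)) \<in> measurable M (N \<Otimes>\<^sub>M N)" by measurable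
  have Ev_eq: "?Ev = (\<lambda>w. (Phi w, Eps w)) -` Q \<inter> space M"
    unfolding Q_def ev using measurable_space[OF PE] by auto
  interpret PP: prob_space "distr M N Phi" by (rule prob_space_distr) simp
  interpret PEs: prob_space "distr M N Eps" by (rule prob_space_distr) simp
  have joint: "distr M N Phi \<Otimes>\<^sub>M distr M N Eps = distr M (N \<Otimes>\<^sub>M N) (\<lambda>w. (Phi w, Eps w))"
    using ind unfolding indep_var_distribution_eq N_def Phi_def Eps_def by simp
  have "emeasure M ?Ev = emeasure (distr M (N \<Otimes>\<^sub>M N) (\<lambda>w. (Phi w, Eps w))) Q"
    unfolding Ev_eq by (rule emeasure_distr[symmetric]) (use PE in auto)
  also have "\<dots> = emeasure (distr M N Phi \<Otimes>\<^sub>M distr M N Eps) Q" unfolding joint ..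
  also have "\<dots> = (\<integral>\<^sup>+c. emeasure (distr M N Eps) (Pair c -` Q) \<partial>distr M N Phi)"
    by (rule PEs.emeasure_pair_measure_alt) (simp add: Q_def)
  also have "\<dots> \<le> (\<integral>\<^sup>+c. ennreal ?bnd \<partial>distr M N Phi)"
  proof (rule nn_integral_mono)
    fix c assume c: "c \<in> space (distr M N Phi)"
    then have cN: "c \<in> space N" by simp
    define A where "A = {e \<in> space N. x \<le> g (c, e)}"
    have As: "A \<in> sets N" unfolding A_def using gM2[OF cN] by measurable
    have "Pair c -` Q = A" unfolding Q_def A_def using cN by (auto simp: space_pair_measure)
    then have "emeasure (distr M N Eps) (Pair c -` Q) = emeasure M (Eps -` A \<inter> space M)"
      using As by (simp add: emeasure_distr)
    also have "Eps -` A \<inter> space M = {w \<in> space M. x \<le> g (c, Eps w)}"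
      unfolding A_def using measurable_space[OF EpsM] by auto
    also have "emeasure M \<dots> \<le> ennreal ?bnd"
    proof (cases "(\<Sum>k=1..n. (c k)\<^sup>2) = 0")
      case True
      then have E: "{w \<in> space M. x \<le> g (c, Eps w)} = {}" unfolding g_def using x by auto
      show ?thesis unfolding E by simp
    next
      case False
      define S where "S = (\<Sum>k=1..n. (c k)\<^sup>2)"
      have S0: "0 < S" using False unfolding S_def by (metis less_eq_real_def sum_nonneg zero_le_power2)
      define a where "a k = s * c k / sqrt S" for k
      have s2: "s\<^sup>2 = 1" using sign by auto
      have sa: "(\<Sum>k=1..n. (a k)\<^sup>2) \<le> 1"
      proof -
        have "(\<Sum>k=1..n. (a k)\<^sup>2) = s\<^sup>2 * S / S"
          unfolding a_def S_def by (simp add: power_divide power_mult_distrib sum_divide_distrib[symmetric] sum_distrib_left)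
            (use S0 S_def in simp)
        then show ?thesis using s2 S0 by simp
      qed
      have "{w \<in> space M. x \<le> g (c, Eps w)} = {w \<in> space M. x \<le> (\<Sum>k=1..n. a k * eps k w)}"
      proof -
        have "g (c, Eps w) = (\<Sum>k=1..n. a k * eps k w)" for w
          unfolding g_def a_def Eps_def S_def
          by (simp add: sum_divide_distrib sum_distrib_left mult.assoc)
        then show ?thesis by simp
      qed
      also have "measure M \<dots> \<le> ?bnd"
        by (rule fixed_weight_bound[OF em ei md mom al u x sa])
      then have "emeasure M {w \<in> space M. x \<le> (\<Sum>k=1..n. a k * eps k w)} \<le> ennreal ?bnd"
        by (simp add: emeasure_eq_measure ennreal_leI)
      finally show ?thesis .
    qed
    finally show "emeasure (distr M N Eps) (Pair c -` Q) \<le> ennreal ?bnd" .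
  qed
  also have "\<dots> = ennreal ?bnd"
  proof -
    have "emeasure (distr M N Phi) (space N) = 1" using PP.emeasure_space_1 by simp
    then show ?thesis by (simp del: ennreal_numeral ennreal_mult)
  qed
  finally have "emeasure M ?Ev \<le> ennreal ?bnd" .
  then show ?thesis using bnd0 by (simp add: emeasure_eq_measure ennreal_le_iff)
qed

end


lemma det_bound:
  fixes \<alpha> u x :: real
  assumes al: "0 < \<alpha>" "\<alpha> < 1" and u1: "1 \<le> u" and x: "0 < x"
  shows "(if x < u powr (1 / (2 - \<alpha>)) then 2 * exp (- (x\<^sup>2 / (2 * u)))
                else 2 * exp (- (1/2) * x powr \<alpha>))
            \<le> 2 * exp (- (x\<^sup>2 / (2 * (u + x powr (2 - \<alpha>)))))"
proof (cases "x < u powr (1 / (2 - \<alpha>))")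
  case True
  have p0: "0 \<le> x powr (2 - \<alpha>)" by simp
  have "x\<^sup>2 / (2 * (u + x powr (2 - \<alpha>))) \<le> x\<^sup>2 / (2 * u)"
    using u1 p0 by (intro divide_left_mono) (auto intro!: mult_pos_pos add_pos_nonneg)
  then show ?thesis using True by simp
next
  case False
  have xsq: "x powr \<alpha> * x powr (2 - \<alpha>) = x\<^sup>2" by (rule x_sq_split[OF x])
  have up: "0 < u + x powr (2 - \<alpha>)" using u1 by (smt (verit) powr_ge_zero)
  have "x\<^sup>2 \<le> x powr \<alpha> * (u + x powr (2 - \<alpha>))"
    using xsq u1 by (simp add: distrib_left)
  then have "x\<^sup>2 / (2 * (u + x powr (2 - \<alpha>))) \<le> (1/2) * x powr \<alpha>"
    using up by (simp add: field_simps)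
  then show ?thesis using False by simp
qed

theorem theorem3p1:
  fixes M :: "'a measure" and \<theta> \<alpha> D :: real
    and phi eps X :: "nat \<Rightarrow> 'a \<Rightarrow> real"
  assumes "prob_space M"
    and alpha: "0 < \<alpha>" "\<alpha> < 1"
    and model: "\<And>k w. X k w = \<theta> * phi k w + eps k w"
    and phi_meas: "\<And>k. phi k \<in> borel_measurable M"
    and eps_meas: "\<And>k. eps k \<in> borel_measurable M"
    and phi_indep: "prob_space.indep_vars M (\<lambda>_. borel) phi {1..}"
    and phi_eps_indep: "prob_space.indep_var M
          (Pi\<^sub>M {1..} (\<lambda>_. borel)) (\<lambda>w. \<lambda>k\<in>{1..}. phi k w)
          (Pi\<^sub>M {1..} (\<lambda>_. borel)) (\<lambda>w. \<lambda>k\<in>{1..}. eps k w)"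
    and mart_int: "\<And>i. i \<ge> 1 \<Longrightarrow> integrable M (eps i)"
    and mart_diff: "\<And>i. i \<ge> 1 \<Longrightarrow>
          AE w in M. real_cond_exp M (nat_filtration M eps i) (eps i) w = 0"
    and moment: "\<And>i. i \<ge> 1 \<Longrightarrow>
          AE w in M. nn_cond_exp M (nat_filtration M eps i)
             (\<lambda>w. ennreal ((eps i w)\<^sup>2 * exp (\<bar>eps i w\<bar> powr \<alpha>))) w \<le> ennreal D"
    and pos: "\<And>n. n \<ge> 1 \<Longrightarrow> AE w in M. (\<Sum>k=1..n. (phi k w)\<^sup>2) > 0"
    and sign: "s \<in> {1, -1 :: real}"
  shows "(\<forall>n\<ge>1. \<forall>u\<ge>max D 1. \<forall>x>0.
            measure M {w \<in> space M.
               s * (lse phi X n w - \<theta>) * sqrt (\<Sum>k=1..n. (phi k w)\<^sup>2) \<ge> x}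
            \<le> (if x < u powr (1 / (2 - \<alpha>)) then 2 * exp (- (x\<^sup>2 / (2 * u)))
                else 2 * exp (- (1/2) * x powr \<alpha>))
          \<and> (if x < u powr (1 / (2 - \<alpha>)) then 2 * exp (- (x\<^sup>2 / (2 * u)))
                else 2 * exp (- (1/2) * x powr \<alpha>))
            \<le> 2 * exp (- (x\<^sup>2 / (2 * (u + x powr (2 - \<alpha>))))))
       \<and> (\<forall>x>0. \<exists>c>0. (\<lambda>n. measure M {w \<in> space M.
               s * (lse phi X n w - \<theta>) * sqrt (\<Sum>k=1..n. (phi k w)\<^sup>2) \<ge> sqrt (real n) * x})
            \<in> O(\<lambda>n. exp (- c * real n powr (\<alpha> / 2))))"
proof -
  interpret prob_space M by fact
  note mb = main_bound[OF model phi_meas eps_meas phi_eps_indep mart_int mart_diff moment alpha _ _ sign]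
  have part1: "\<forall>n\<ge>1. \<forall>u\<ge>max D 1. \<forall>x>0.
            measure M {w \<in> space M.
               s * (lse phi X n w - \<theta>) * sqrt (\<Sum>k=1..n. (phi k w)\<^sup>2) \<ge> x}
            \<le> (if x < u powr (1 / (2 - \<alpha>)) then 2 * exp (- (x\<^sup>2 / (2 * u)))
                else 2 * exp (- (1/2) * x powr \<alpha>))
          \<and> (if x < u powr (1 / (2 - \<alpha>)) then 2 * exp (- (x\<^sup>2 / (2 * u)))
                else 2 * exp (- (1/2) * x powr \<alpha>))
            \<le> 2 * exp (- (x\<^sup>2 / (2 * (u + x powr (2 - \<alpha>)))))"
  proof (intro allI impI conjI)
    fix n :: nat and u x :: real assume u: "max D 1 \<le> u" and x: "0 < x"
    show "measure M {w \<in> space M.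
               s * (lse phi X n w - \<theta>) * sqrt (\<Sum>k=1..n. (phi k w)\<^sup>2) \<ge> x}
            \<le> (if x < u powr (1 / (2 - \<alpha>)) then 2 * exp (- (x\<^sup>2 / (2 * u)))
                else 2 * exp (- (1/2) * x powr \<alpha>))"
      by (rule mb) (use u x in auto)
    show "(if x < u powr (1 / (2 - \<alpha>)) then 2 * exp (- (x\<^sup>2 / (2 * u)))
                else 2 * exp (- (1/2) * x powr \<alpha>))
            \<le> 2 * exp (- (x\<^sup>2 / (2 * (u + x powr (2 - \<alpha>)))))"
      using u by (intro det_bound[OF alpha _ x]) auto
  qed
  have part2: "\<forall>x>0. \<exists>c>0. (\<lambda>n. measure M {w \<in> space M.
               s * (lse phi X n w - \<theta>) * sqrt (\<Sum>k=1..n. (phi k w)\<^sup>2) \<ge> sqrt (real n) * x})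
            \<in> O(\<lambda>n. exp (- c * real n powr (\<alpha> / 2)))"
  proof (intro allI impI)
    fix x :: real assume x: "0 < x"
    define u where "u = max D 1"
    define K where "K = u powr (1 / (2 - \<alpha>))"
    define c where "c = x powr \<alpha> / 2"
    have c0: "0 < c" unfolding c_def using x by simp
    have K0: "0 \<le> K" unfolding K_def by simp
    define N where "N = nat \<lceil>(K / x)\<^sup>2\<rceil> + 1"
    have ev: "eventually (\<lambda>n. norm (measure M {w \<in> space M.
               s * (lse phi X n w - \<theta>) * sqrt (\<Sum>k=1..n. (phi k w)\<^sup>2) \<ge> sqrt (real n) * x})
             \<le> 2 * norm (exp (- c * real n powr (\<alpha> / 2)))) sequentially"
      unfolding eventually_at_top_linorder
    proof (intro exI[of _ N] allI impI)
      fix n assume n: "N \<le> n"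
      have "(K / x)\<^sup>2 \<le> real n" using n unfolding N_def by linarith
      then have "sqrt ((K / x)\<^sup>2) \<le> sqrt (real n)" by (rule real_sqrt_le_mono)
      then have "K / x \<le> sqrt (real n)" using K0 x by simp
      then have Kn: "K \<le> sqrt (real n) * x" using x by (simp add: field_simps)
      have n0: "0 < real n" using n unfolding N_def by simp
      have y0: "0 < sqrt (real n) * x" using n0 x by simp
      have "measure M {w \<in> space M.
               s * (lse phi X n w - \<theta>) * sqrt (\<Sum>k=1..n. (phi k w)\<^sup>2) \<ge> sqrt (real n) * x}
            \<le> (if sqrt (real n) * x < u powr (1 / (2 - \<alpha>)) then 2 * exp (- ((sqrt (real n) * x)\<^sup>2 / (2 * u)))
                else 2 * exp (- (1/2) * (sqrt (real n) * x) powr \<alpha>))"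
        by (rule mb) (use y0 in \<open>auto simp: u_def\<close>)
      also have "\<dots> = 2 * exp (- (1/2) * (sqrt (real n) * x) powr \<alpha>)"
        using Kn unfolding K_def by simp
      also have "(sqrt (real n) * x) powr \<alpha> = real n powr (\<alpha> / 2) * x powr \<alpha>"
      proof -
        have "(sqrt (real n) * x) powr \<alpha> = sqrt (real n) powr \<alpha> * x powr \<alpha>"
          using x by (simp add: powr_mult)
        also have "sqrt (real n) powr \<alpha> = real n powr (\<alpha> / 2)"
          by (simp add: powr_half_sqrt[symmetric] powr_powr)
        finally show ?thesis .
      qed
      also have "2 * exp (- (1/2) * (real n powr (\<alpha> / 2) * x powr \<alpha>)) = 2 * exp (- c * real n powr (\<alpha> / 2))"
        unfolding c_def by (simp add: algebra_simps)
      finally show "norm (measure M {w \<in> space M.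
               s * (lse phi X n w - \<theta>) * sqrt (\<Sum>k=1..n. (phi k w)\<^sup>2) \<ge> sqrt (real n) * x})
             \<le> 2 * norm (exp (- c * real n powr (\<alpha> / 2)))" by simp
    qed
    show "\<exists>c>0. (\<lambda>n. measure M {w \<in> space M.
               s * (lse phi X n w - \<theta>) * sqrt (\<Sum>k=1..n. (phi k w)\<^sup>2) \<ge> sqrt (real n) * x})
            \<in> O(\<lambda>n. exp (- c * real n powr (\<alpha> / 2)))"
      using c0 ev by (intro exI[of _ c] conjI bigoI) auto
  qed
  show ?thesis using part1 part2 by blast
qed


end
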